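(* Let $G$ be a connected signed digraph. (a) If $G$ has a negative cycle, then there exists a degree-bounded finite dynamical system on $G$ without fixed point. (b) If $G$ has a positive cycle, then there exists a degree-bounded finite dynamical system on $G$ with (exactly) two fixed points. (c) More generally, if $G$ has $k\ge 1$ pairwise vertex-disjoint positive cycles, then there exists a degree-bounded finite dynamical system on $G$ with (exactly) $2^k$ fixed points.
   Context: A finite dynamical system (FDS) with $n$ components is a map $f=(f_1,\dots,f_n):X\to X$ where $X=X_1\times\cdots\times X_n$ and each $X_i$ is a nonempty finite interval of integers; a fixed point is $x\in X$ with $f(x)=x$. A signed digraph is a pair $G=(V,E)$ with $E\subseteq V\times V\times\{+,-\}$; $(j,i,s)\in E$ is an arc from $j$ to $i$ of sign $s$ (loops allowed; $G$ may have both a positive and a negative arc from $j$ to $i$). The in-degree $d^{\mathrm{in}}_G(i)$ is the number of arcs entering $i$ and the out-degree $d^{\mathrm{out}}_G(i)$ the number of arcs leaving $i$ (positive and negative arcs counted separately). $G$ is connected if its underlying undirected graph is connected. A cycle of $G$ is a directed cycle without repeated vertices, i.e. a sequence of distinct vertices $i_1,\dots,i_\ell$ together with chosen arcs from $i_1$ to $i_2$, ..., from $i_{\ell-1}$ to $i_\ell$ and from $i_\ell$ to $i_1$ (a loop is a cycle of length 1); its sign is the product of the signs of its arcs. The interaction graph of an FDS $f$ is the signed digraph on $\{1,\dots,n\}$ with a positive (resp. negative) arc from $j$ to $i$ iff there is $x\in X$ with $x_j<\max(X_j)$ such that $f_i(x+e_j)-f_i(x)$ is positive (resp. negative), $e_j$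 the $j$-th unit vector. $f$ is an FDS on $G$ if $G$ is its interaction graph. $f$ is degree-bounded if, with $G$ its interaction graph, for every $i$: $|X_i|=2$ if $d^{\mathrm{out}}_G(i)=0<d^{\mathrm{in}}_G(i)$, and $|X_i|\le d^{\mathrm{out}}_G(i)+1$ otherwise. *)

theory Defs
  imports Main
begin

datatype sign = Pos | Neg

text \<open>A signed digraph on the vertex type 'v (all elements of 'v are vertices):
  an arc (j, i, s) goes from j to i and has sign s.\<close>
type_synonym 'v sdigraph = "('v \<times> 'v \<times> sign) set"

definition indeg :: "'v sdigraph \<Rightarrow> 'v \<Rightarrow> nat" where
  "indeg E i = card {(j, s). (j, i, s) \<in> E}"

definition outdeg :: "'v sdigraph \<Rightarrow> 'v \<Rightarrow> nat" where
  "outdeg E i = card {(k, s). (i, k, s) \<in> E}"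

definition sconnected :: "'v sdigraph \<Rightarrow> bool" where
  "sconnected E \<longleftrightarrow>
     (let R = {(j, i). \<exists>s. (j, i, s) \<in> E} in \<forall>u v. (u, v) \<in> (R \<union> R\<inverse>)\<^sup>*)"

text \<open>A cycle is a nonempty list of (vertex, sign of the outgoing chosen arc),
  with distinct vertices, the k-th arc going from the k-th vertex to the next
  one (cyclically).\<close>
definition is_cycle :: "'v sdigraph \<Rightarrow> ('v \<times> sign) list \<Rightarrow> bool" where
  "is_cycle E c \<longleftrightarrow> c \<noteq> [] \<and> distinct (map fst c) \<and>
     (\<forall>k < length c. (fst (c ! k), fst (c ! ((k + 1) mod length c)), snd (c ! k)) \<in> E)"

definition cycle_positive :: "('v \<times> sign) list \<Rightarrow> bool" where
  "cycle_positive c \<longleftrightarrow> even (length (filter (\<lambda>s. s = Neg) (map snd c)))"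

definition positive_cycle :: "'v sdigraph \<Rightarrow> ('v \<times> sign) list \<Rightarrow> bool" where
  "positive_cycle E c \<longleftrightarrow> is_cycle E c \<and> cycle_positive c"

definition negative_cycle :: "'v sdigraph \<Rightarrow> ('v \<times> sign) list \<Rightarrow> bool" where
  "negative_cycle E c \<longleftrightarrow> is_cycle E c \<and> \<not> cycle_positive c"

definition cycle_vertices :: "('v \<times> sign) list \<Rightarrow> 'v set" where
  "cycle_vertices c = set (map fst c)"

text \<open>FDS: X = product of integer intervals [lo i, hi i]; f : X \<rightarrow> X
  (represented by a total function whose values outside X are irrelevant).\<close>
definition box :: "('v \<Rightarrow> int) \<Rightarrow> ('v \<Rightarrow> int) \<Rightarrow> ('v \<Rightarrow> int) set" where
  "box lo hi = {x. \<forall>i. lo i \<le> x i \<and> x i \<le> hi i}"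

definition is_fds :: "('v \<Rightarrow> int) \<Rightarrow> ('v \<Rightarrow> int) \<Rightarrow> (('v \<Rightarrow> int) \<Rightarrow> ('v \<Rightarrow> int)) \<Rightarrow> bool" where
  "is_fds lo hi f \<longleftrightarrow> (\<forall>i. lo i \<le> hi i) \<and> (\<forall>x \<in> box lo hi. f x \<in> box lo hi)"

definition interaction_graph ::
  "('v \<Rightarrow> int) \<Rightarrow> ('v \<Rightarrow> int) \<Rightarrow> (('v \<Rightarrow> int) \<Rightarrow> ('v \<Rightarrow> int)) \<Rightarrow> 'v sdigraph" where
  "interaction_graph lo hi f =
     {(j, i, s). \<exists>x \<in> box lo hi. x j < hi j \<and>
        ((s = Pos \<and> f (x(j := x j + 1)) i - f x i > 0) \<or>
         (s = Neg \<and> f (x(j := x j + 1)) i - f x i < 0))}"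

definition fds_on ::
  "'v sdigraph \<Rightarrow> ('v \<Rightarrow> int) \<Rightarrow> ('v \<Rightarrow> int) \<Rightarrow> (('v \<Rightarrow> int) \<Rightarrow> ('v \<Rightarrow> int)) \<Rightarrow> bool" where
  "fds_on E lo hi f \<longleftrightarrow> is_fds lo hi f \<and> interaction_graph lo hi f = E"

text \<open>|X_i| = hi i - lo i + 1.\<close>
definition degree_bounded ::
  "('v \<Rightarrow> int) \<Rightarrow> ('v \<Rightarrow> int) \<Rightarrow> (('v \<Rightarrow> int) \<Rightarrow> ('v \<Rightarrow> int)) \<Rightarrow> bool" where
  "degree_bounded lo hi f \<longleftrightarrow>
     (let G = interaction_graph lo hi f in
      \<forall>i. (if outdeg G i = 0 \<and> 0 < indeg G i
           then hi i - lo i + 1 = 2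
           else hi i - lo i + 1 \<le> int (outdeg G i) + 1))"

definition fixed_points ::
  "('v \<Rightarrow> int) \<Rightarrow> ('v \<Rightarrow> int) \<Rightarrow> (('v \<Rightarrow> int) \<Rightarrow> ('v \<Rightarrow> int)) \<Rightarrow> ('v \<Rightarrow> int) set" where
  "fixed_points lo hi f = {x \<in> box lo hi. f x = x}"

end

theory Submission
  imports Defs
begin

lemma UNIV_sign: "(UNIV :: sign set) = {Pos, Neg}"
  using sign.exhaust by auto

instance sign :: finite
  by standard (simp add: UNIV_sign)

definition flip :: "sign \<Rightarrow> int \<Rightarrow> int" where
  "flip s v = (if s = Pos then v else 1 - v)"

locale constr =
  fixes E :: "('v::finite) sdigraph" and S :: "'v set" and pr :: "'v \<Rightarrow> 'v"
    and sg :: "'v \<Rightarrow> sign" and t :: "'v \<times> 'v \<times> sign \<Rightarrow> int"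
  assumes conn: "sconnected E" and Sne: "S \<noteq> {}"
  and cyc_in: "\<And>i. i \<in> S \<Longrightarrow> (pr i, i, sg i) \<in> E \<and> pr i \<in> S \<and> t (pr i, i, sg i) = 1"
  and t_range: "\<And>j i s. (j,i,s) \<in> E \<Longrightarrow> 1 \<le> t (j,i,s) \<and> t (j,i,s) \<le> int (outdeg E j)"
  and t_pair: "\<And>j i. (j,i,Pos) \<in> E \<Longrightarrow> (j,i,Neg) \<in> E \<Longrightarrow> t (j,i,Pos) \<noteq> t (j,i,Neg)"
  and t_S: "\<And>j i s. (j,i,s) \<in> E \<Longrightarrow> t (j,i,s) = 1 \<Longrightarrow> j \<in> S \<Longrightarrow> i \<in> S \<and> pr i = j \<and> sg i = s"
  and t_T: "\<And>j i s i' s'. (j,i,s) \<in> E \<Longrightarrow> t (j,i,s) = 1 \<Longrightarrow> j \<notin> S \<Longrightarrow> (j,i',s') \<in> E \<Longrightarrow> i' = i"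
begin

definition kap :: "'v \<Rightarrow> 'v \<Rightarrow> int \<Rightarrow> int" where
  "kap i j v = (if (j,i,Pos) \<in> E then (if t (j,i,Pos) \<le> v then 1 else 0) else 0)
             + (if (j,i,Neg) \<in> E then (if v < t (j,i,Neg) then 1 else 0) else 0)"

definition src :: "'v \<Rightarrow> 'v set" where "src i = {j. \<exists>s. (j,i,s) \<in> E}"

definition lo :: "'v \<Rightarrow> 'v \<Rightarrow> int" where
  "lo i j = (if (j,i,Pos) \<in> E \<and> (j,i,Neg) \<in> E \<and> t (j,i,Pos) < t (j,i,Neg) then 1 else 0)"

definition LL :: "'v \<Rightarrow> int" where "LL i = (\<Sum>j\<in>UNIV. lo i j)"
definition mm :: "'v \<Rightarrow> int" where "mm i = int (card (src i))"
definition live :: "'v \<Rightarrow> 'v \<Rightarrow> bool" where "live j i \<longleftrightarrow> (\<exists>s. (j,i,s) \<in> E \<and> t (j,i,s) = 1)"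

definition hi :: "'v \<Rightarrow> int" where
  "hi j = (if outdeg E j = 0 then (if indeg E j > 0 then 1 else 0) else int (outdeg E j))"

lemma kap_bounds: "lo i j \<le> kap i j v \<and> kap i j v \<le> lo i j + 1"
  using t_pair[of j i] unfolding kap_def lo_def by (auto split: if_splits)

lemma kap_nonsrc: "j \<notin> src i \<Longrightarrow> kap i j v = 0 \<and> lo i j = 0"
  unfolding kap_def lo_def src_def by auto

lemma kap_incr: "kap i j v < kap i j w \<Longrightarrow> v \<le> w \<Longrightarrow> (j,i,Pos) \<in> E"
  unfolding kap_def by (auto split: if_splits)

lemma kap_decr: "kap i j v > kap i j w \<Longrightarrow> v \<le> w \<Longrightarrow> (j,i,Neg) \<in> E"
  unfolding kap_def by (auto split: if_splits)

lemma t_ge2: "(j,i,s) \<in> E \<Longrightarrow> \<not> live j i \<Longrightarrow> 2 \<le> t (j,i,s)"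
  using t_range[of j i s] unfolding live_def by fastforce

lemma kap_dead: "\<not> live j i \<Longrightarrow> v \<in> {0,1} \<Longrightarrow> kap i j v = kap i j 0"
proof -
  assume d: "\<not> live j i" and v: "v \<in> {0,1}"
  have p: "(j,i,Pos) \<in> E \<Longrightarrow> 2 \<le> t (j,i,Pos)" using t_ge2 d by blast
  have n: "(j,i,Neg) \<in> E \<Longrightarrow> 2 \<le> t (j,i,Neg)" using t_ge2 d by blast
  show ?thesis using p n v unfolding kap_def by auto
qed

lemma kap_at_pos: "(j,i,Pos) \<in> E \<Longrightarrow> kap i j (t (j,i,Pos) - 1) = lo i j \<and> kap i j (t (j,i,Pos)) = lo i j + 1"
  using t_pair[of j i] unfolding kap_def lo_def by (auto split: if_splits)

lemma kap_at_neg: "(j,i,Neg) \<in> E \<Longrightarrow> kap i j (t (j,i,Neg) - 1) = lo i j + 1 \<and> kap i j (t (j,i,Neg)) = lo i j"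
  using t_pair[of j i] unfolding kap_def lo_def by (auto split: if_splits)

lemma hi_out: "(j,i,s) \<in> E \<Longrightarrow> hi j = int (outdeg E j)"
  using t_range[of j i s] unfolding hi_def by auto

lemma kap_wit: "j \<in> src i \<Longrightarrow> \<exists>vl vh. 0 \<le> vl \<and> vl \<le> hi j \<and> 0 \<le> vh \<and> vh \<le> hi j
     \<and> kap i j vl = lo i j \<and> kap i j vh = lo i j + 1"
proof -
  assume "j \<in> src i"
  then obtain s where s: "(j,i,s) \<in> E" unfolding src_def by auto
  have h: "hi j = int (outdeg E j)" using hi_out[OF s] .
  show ?thesis
  proof (cases "(j,i,Pos) \<in> E")
    case P: True
    note a = kap_at_pos[OF P] t_range[OF P] 
    show ?thesis
    proof (cases "(j,i,Neg) \<in> E")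
      case N: True
      note b = kap_at_neg[OF N] t_range[OF N]
      show ?thesis
      proof (cases "t (j,i,Pos) < t (j,i,Neg)")
        case True
        then show ?thesis using a b h by (intro exI[of _ "t (j,i,Pos) - 1"] exI[of _ "t (j,i,Pos)"]) auto
      next
        case False
        then show ?thesis using a b h by (intro exI[of _ "t (j,i,Neg)"] exI[of _ "t (j,i,Neg) - 1"]) auto
      qed
    next
      case N: False
      then show ?thesis using a h by (intro exI[of _ "t (j,i,Pos) - 1"] exI[of _ "t (j,i,Pos)"]) auto
    qed
  next
    case P: False
    then have N: "(j,i,Neg) \<in> E" using s by (cases s) auto
    note b = kap_at_neg[OF N] t_range[OF N]
    show ?thesis using b h by (intro exI[of _ "t (j,i,Neg)"] exI[of _ "t (j,i,Neg) - 1"]) auto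
  qed
qed


end

context constr begin

primrec Fs :: "nat \<Rightarrow> 'v set" where
  "Fs 0 = {}"
| "Fs (Suc n) = {i. i \<notin> S \<and> (src i = {} \<or> (\<exists>j\<in>src i. \<not> live j i \<or> j \<in> Fs n))}"

lemma Fs_notS: "i \<in> Fs n \<Longrightarrow> i \<notin> S"
  by (cases n) auto

lemma Fs_mono: "Fs n \<subseteq> Fs (Suc n)"
proof (induction n)
  case 0 then show ?case by simp
next
  case (Suc n)
  have "\<And>x. x \<in> Fs (Suc n) \<Longrightarrow> x \<in> Fs (Suc (Suc n))"
  proof -
    fix x assume x: "x \<in> Fs (Suc n)"
    then have "x \<notin> S" "src x = {} \<or> (\<exists>j\<in>src x. \<not> live j x \<or> j \<in> Fs n)" by auto
    then show "x \<in> Fs (Suc (Suc n))" using Suc.IH by (simp only: Fs.simps(2)) blast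
  qed
  then show ?case by blast
qed

lemma Fs_mono_le: "n \<le> k \<Longrightarrow> Fs n \<subseteq> Fs k"
  by (rule lift_Suc_mono_le[of Fs]) (use Fs_mono in auto)

lemma all_Fs: "i \<notin> S \<Longrightarrow> \<exists>n. i \<in> Fs n"
proof (rule ccontr)
  assume iS: "i \<notin> S" and nF: "\<not> (\<exists>n. i \<in> Fs n)"
  define W where "W = {i. i \<notin> S \<and> (\<forall>n. i \<notin> Fs n)}"
  have iW: "i \<in> W" using iS nF unfolding W_def by auto
  have F1: "src w \<noteq> {} \<and> (\<forall>j\<in>src w. live j w \<and> j \<in> W)" if "w \<in> W" for w
  proof -
    have wS: "w \<notin> S" and wF: "\<And>n. w \<notin> Fs n" using that unfolding W_def by auto
    have "src w \<noteq> {}" using wF[of 1] wS by auto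
    moreover have "live j w \<and> j \<in> W" if j: "j \<in> src w" for j
    proof -
      have lv: "live j w" using wF[of 1] wS j by auto
      have jF: "j \<notin> Fs n" for n using wF[of "Suc n"] wS j by auto
      have "j \<notin> S"
      proof
        assume "j \<in> S"
        with lv obtain s where "(j,w,s) \<in> E" "t (j,w,s) = 1" unfolding live_def by auto
        with t_S \<open>j \<in> S\<close> wS show False by blast
      qed
      then show ?thesis using lv jF unfolding W_def by auto
    qed
    ultimately show ?thesis by blast
  qed
  have F2: "i' = w" if "w \<in> W" "j \<in> src w" "(j,i',s') \<in> E" for w j i' s'
  proof -
    have lv: "live j w" and jW: "j \<in> W" using F1[OF that(1)] that(2) by auto
    then obtain s where "(j,w,s) \<in> E" "t (j,w,s) = 1" unfolding live_def by auto
    moreover have "j \<notin> S" using jW unfolding W_def by auto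
    ultimately show ?thesis using t_T that(3) by blast
  qed
  define psi where "psi w = (SOME j. j \<in> src w)" for w
  have psi: "psi w \<in> src w \<and> psi w \<in> W" if "w \<in> W" for w
  proof -
    have "psi w \<in> src w" using F1[OF that] unfolding psi_def by (meson equals0I someI_ex)
    then show ?thesis using F1[OF that] by auto
  qed
  have inj: "inj_on psi W"
  proof (rule inj_onI)
    fix w w' assume w: "w \<in> W" and w': "w' \<in> W" and eq: "psi w = psi w'"
    obtain s' where "(psi w', w', s') \<in> E" using psi[OF w'] unfolding src_def by auto
    then show "w = w'" using F2[OF w] psi[OF w] eq by metis
  qed
  have "psi ` W \<subseteq> W" using psi by auto
  moreover have "card (psi ` W) = card W" using card_image[OF inj] .
  ultimately have imgW: "psi ` W = W" by (simp add: card_subset_eq)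
  define R where "R = {(j, i). \<exists>s. (j, i, s) \<in> E}"
  have clos: "b \<in> W" if "a \<in> W" "(a,b) \<in> R \<union> R\<inverse>" for a b
  proof -
    from that(2) show ?thesis
    proof
      assume "(a,b) \<in> R"
      then obtain s where s: "(a,b,s) \<in> E" unfolding R_def by auto
      have "a \<in> psi ` W" using imgW that(1) by simp
      then obtain w where w: "w \<in> W" "a = psi w" by auto
      then have "b = w" using F2[OF w(1) _ s] psi[OF w(1)] by simp
      then show ?thesis using w by simp
    next
      assume "(a,b) \<in> R\<inverse>"
      then have "b \<in> src a" unfolding R_def src_def by auto
      then show ?thesis using F1[OF that(1)] by auto
    qed
  qed
  obtain s0 where s0: "s0 \<in> S" using Sne by auto
  have "\<forall>u v. (u, v) \<in> (R \<union> R\<inverse>)\<^sup>*" using conn unfolding sconnected_def R_def Let_def by simp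
  then have "(i, s0) \<in> (R \<union> R\<inverse>)\<^sup>*" by blast
  then have "s0 \<in> W"
  proof (induction rule: rtrancl_induct)
    case base then show ?case using iW .
  next
    case (step y z) then show ?case using clos by blast
  qed
  then show False using s0 unfolding W_def by auto
qed

definition rank :: "'v \<Rightarrow> nat" where "rank i = (LEAST n. i \<in> Fs n)"

lemma rank_in: "i \<notin> S \<Longrightarrow> i \<in> Fs (rank i)"
  unfolding rank_def using all_Fs by (rule LeastI_ex)

lemma rank_le: "i \<in> Fs n \<Longrightarrow> rank i \<le> n"
  unfolding rank_def by (rule Least_le)

definition can :: "'v \<Rightarrow> 'v" where
  "can i = (SOME j. j \<in> src i \<and> (\<not> live j i \<or> j \<in> Fs (rank i - 1)))"

lemma can_prop: "i \<notin> S \<Longrightarrow> src i \<noteq> {} \<Longrightarrow>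
   can i \<in> src i \<and> (live (can i) i \<longrightarrow> can i \<notin> S \<and> rank (can i) < rank i)"
proof -
  assume iS: "i \<notin> S" and ne: "src i \<noteq> {}"
  have r: "i \<in> Fs (rank i)" using rank_in[OF iS] .
  then have "rank i \<noteq> 0" by (cases "rank i") auto
  then obtain n where n: "rank i = Suc n" by (cases "rank i") auto
  have "\<exists>j. j \<in> src i \<and> (\<not> live j i \<or> j \<in> Fs (rank i - 1))" using r ne n by auto
  then have c: "can i \<in> src i \<and> (\<not> live (can i) i \<or> can i \<in> Fs (rank i - 1))"
    unfolding can_def by (rule someI_ex)
  show ?thesis
  proof (intro conjI impI)
    show "can i \<in> src i" using c by simp
  next
    assume "live (can i) i"
    then have "can i \<in> Fs n" using c n by auto
    then show "can i \<notin> S" "rank (can i) < rank i" using Fs_notS rank_le n by force+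
  qed
qed

definition Phi :: "('v \<Rightarrow> int) \<Rightarrow> 'v \<Rightarrow> int" where
  "Phi c i = (if src i = {} then 0 else
     if kap i (can i) (if live (can i) i then c (can i) else 0) = lo i (can i) + 1 then 1 else 0)"

lemma Phi_cong: "(src i \<noteq> {} \<Longrightarrow> live (can i) i \<Longrightarrow> c (can i) = c' (can i)) \<Longrightarrow> Phi c i = Phi c' i"
proof (cases "src i = {}")
  case True then show ?thesis unfolding Phi_def by simp
next
  case False
  assume h: "src i \<noteq> {} \<Longrightarrow> live (can i) i \<Longrightarrow> c (can i) = c' (can i)"
  show ?thesis using h[OF False] False unfolding Phi_def by (cases "live (can i) i") auto
qed

lemma cc_ex_N: "\<exists>c. \<forall>i. i \<notin> S \<and> rank i < N \<longrightarrow> c i = Phi c i"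
proof (induction N)
  case 0 then show ?case by simp
next
  case (Suc N)
  then obtain c where c: "\<And>i. i \<notin> S \<Longrightarrow> rank i < N \<Longrightarrow> c i = Phi c i" by blast
  define c' where "c' i = (if i \<notin> S \<and> rank i = N then Phi c i else c i)" for i
  have eq: "Phi c' i = Phi c i" if "i \<notin> S" "rank i \<le> N" for i
  proof (rule Phi_cong)
    assume "src i \<noteq> {}" "live (can i) i"
    then have "can i \<notin> S" "rank (can i) < rank i" using can_prop that(1) by auto
    then show "c' (can i) = c (can i)" using that(2) unfolding c'_def by auto
  qed
  have "c' i = Phi c' i" if "i \<notin> S" "rank i < Suc N" for i
  proof (cases "rank i = N")
    case True
    have "c' i = Phi c i" using True that(1) unfolding c'_def by simp
    moreover have "Phi c' i = Phi c i" using eq[of i] that True by simp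
    ultimately show ?thesis by simp
  next
    case False
    have "c' i = c i" using False unfolding c'_def by simp
    moreover have "c i = Phi c i" using c[of i] that False by simp
    moreover have "Phi c' i = Phi c i" using eq[of i] that False by simp
    ultimately show ?thesis by simp
  qed
  then show ?case by blast
qed

definition cc :: "'v \<Rightarrow> int" where "cc = (SOME c. \<forall>i. i \<notin> S \<longrightarrow> c i = Phi c i)"

lemma cc_prop: "i \<notin> S \<Longrightarrow> cc i = Phi cc i"
proof -
  obtain c where c: "\<forall>i. i \<notin> S \<and> rank i < Suc (Max (range rank)) \<longrightarrow> c i = Phi c i"
    using cc_ex_N by blast
  have "\<forall>i. i \<notin> S \<longrightarrow> c i = Phi c i"
  proof (intro allI impI)
    fix i assume "i \<notin> S"
    moreover have "rank i \<le> Max (range rank)" by (rule Max_ge) auto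
    then have "rank i < Suc (Max (range rank))" by (simp add: less_Suc_eq_le)
    ultimately show "c i = Phi c i" using c by blast
  qed
  then have "\<exists>c. \<forall>i. i \<notin> S \<longrightarrow> c i = Phi c i" by blast
  then have "\<forall>i. i \<notin> S \<longrightarrow> cc i = Phi cc i" unfolding cc_def by (rule someI_ex)
  then show "i \<notin> S \<Longrightarrow> cc i = Phi cc i" by blast
qed

lemma cc01: "i \<notin> S \<Longrightarrow> cc i \<in> {0,1}"
  using cc_prop[of i] unfolding Phi_def by (auto split: if_splits)

end

context constr begin

definition yS :: "'v \<Rightarrow> 'v \<Rightarrow> int" where
  "yS i k = (if k = pr i then (if sg i = Pos then 0 else 1) else if live k i then cc k else 0)"

definition th :: "'v \<Rightarrow> int" where
  "th i = (if i \<in> S then 1 + (\<Sum>k\<in>UNIV. kap i k (yS i k))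
           else if src i = {} then 1
           else if kap i (can i) (if live (can i) i then cc (can i) else 0) = lo i (can i) + 1
                then LL i + 1 else LL i + mm i)"

definition ssum :: "('v \<Rightarrow> int) \<Rightarrow> 'v \<Rightarrow> int" where
  "ssum x i = (\<Sum>k\<in>UNIV. kap i k (x k))"

definition ff :: "('v \<Rightarrow> int) \<Rightarrow> 'v \<Rightarrow> int" where
  "ff x i = (if th i \<le> ssum x i then 1 else 0)"

lemma sum_card: "(\<Sum>k\<in>UNIV. (of_bool (k \<in> A) :: int)) = int (card A)" for A :: "'v set"
  by (subst sum_of_bool_eq) auto

lemma ssum_lo: "LL i \<le> ssum x i"
  unfolding ssum_def LL_def by (rule sum_mono) (use kap_bounds in auto)

lemma ssum_hi: "ssum x i \<le> LL i + mm i"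
proof -
  have "ssum x i \<le> (\<Sum>k\<in>UNIV. lo i k + of_bool (k \<in> src i))"
    unfolding ssum_def
  proof (rule sum_mono)
    fix k show "kap i k (x k) \<le> lo i k + of_bool (k \<in> src i)"
      using kap_bounds[of i k "x k"] kap_nonsrc[of k i] by (cases "k \<in> src i") auto
  qed
  also have "\<dots> = LL i + mm i" unfolding LL_def mm_def sum.distrib sum_card by simp
  finally show ?thesis .
qed

lemma ssum_hi1: "j \<in> src i \<Longrightarrow> kap i j (x j) = lo i j \<Longrightarrow> ssum x i \<le> LL i + mm i - 1"
proof -
  assume j: "j \<in> src i" and kj: "kap i j (x j) = lo i j"
  define d where "d k = lo i k + of_bool (k \<in> src i) - kap i k (x k)" for k
  have d0: "0 \<le> d k" for k
    using kap_bounds[of i k "x k"] kap_nonsrc[of k i] unfolding d_def by (cases "k \<in> src i") auto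
  have "d j \<le> sum d UNIV" by (rule member_le_sum) (use d0 in auto)
  moreover have "d j = 1" using j kj unfolding d_def by simp
  moreover have "sum d UNIV = LL i + mm i - ssum x i"
    unfolding d_def LL_def mm_def ssum_def sum_subtractf sum.distrib sum_card by simp
  ultimately show ?thesis by simp
qed

lemma ssum_lo1: "kap i j (x j) = lo i j + 1 \<Longrightarrow> LL i + 1 \<le> ssum x i"
proof -
  assume kj: "kap i j (x j) = lo i j + 1"
  define d where "d k = kap i k (x k) - lo i k" for k
  have d0: "0 \<le> d k" for k using kap_bounds[of i k "x k"] unfolding d_def by auto
  have "d j \<le> sum d UNIV" by (rule member_le_sum) (use d0 in auto)
  moreover have "d j = 1" using kj unfolding d_def by simp
  moreover have "sum d UNIV = ssum x i - LL i"
    unfolding d_def LL_def ssum_def sum_subtractf by simp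
  ultimately show ?thesis by simp
qed

lemma sum_split: "(\<Sum>k\<in>UNIV. g k) = g j + (\<Sum>k\<in>UNIV - {j}. g k)" for g :: "'v \<Rightarrow> int"
  by (simp add: sum.remove)

lemma ssum_upd: "ssum (x(j := v)) i = ssum x i - kap i j (x j) + kap i j v"
proof -
  have "ssum (x(j := v)) i = kap i j v + (\<Sum>k\<in>UNIV - {j}. kap i k ((x(j := v)) k))"
    unfolding ssum_def by (subst sum_split[of _ j]) simp
  also have "(\<Sum>k\<in>UNIV - {j}. kap i k ((x(j := v)) k)) = (\<Sum>k\<in>UNIV - {j}. kap i k (x k))"
    by (rule sum.cong) auto
  also have "\<dots> = ssum x i - kap i j (x j)" unfolding ssum_def by (subst sum_split[of _ j]) simp
  finally have "ssum (x(j := v)) i = kap i j v + (ssum x i - kap i j (x j))" .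
  then show ?thesis by linarith
qed

lemma mm_pos: "src i \<noteq> {} \<Longrightarrow> 1 \<le> mm i"
  unfolding mm_def by (simp add: Suc_leI card_gt_0_iff)

lemma T_eval:
  assumes x01: "\<And>k. x k \<in> {0,1}" and iS: "i \<notin> S" and ne: "src i \<noteq> {}"
    and lv: "live (can i) i \<Longrightarrow> x (can i) = cc (can i)"
  shows "ff x i = cc i"
proof -
  define j where "j = can i"
  have js: "j \<in> src i" using can_prop[OF iS ne] unfolding j_def by simp
  have kj: "kap i j (x j) = kap i j (if live j i then cc j else 0)"
  proof (cases "live j i")
    case True then show ?thesis using lv unfolding j_def by simp
  next
    case False then show ?thesis using kap_dead[OF False x01[of j]] by simp
  qed
  have c: "cc i = (if kap i j (x j) = lo i j + 1 then 1 else 0)"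
    using cc_prop[OF iS] ne kj unfolding Phi_def j_def by simp
  have t: "th i = (if kap i j (x j) = lo i j + 1 then LL i + 1 else LL i + mm i)"
    using iS ne kj unfolding th_def j_def by simp
  show ?thesis
  proof (cases "kap i j (x j) = lo i j + 1")
    case True
    then show ?thesis using c t ssum_lo1[of i j x, OF True] unfolding ff_def by simp
  next
    case False
    then have "kap i j (x j) = lo i j" using kap_bounds[of i j "x j"] by auto
    then show ?thesis using c t ssum_hi1[of j i x, OF js] False unfolding ff_def by force
  qed
qed

lemma T_eval0: "i \<notin> S \<Longrightarrow> src i = {} \<Longrightarrow> ff x i = 0 \<and> cc i = 0"
proof -
  assume iS: "i \<notin> S" and e: "src i = {}"
  have "ssum x i = 0" unfolding ssum_def using kap_nonsrc e by simp
  moreover have "th i = 1" using iS e unfolding th_def by simp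
  moreover have "cc i = 0" using cc_prop[OF iS] e unfolding Phi_def by simp
  ultimately show ?thesis unfolding ff_def by simp
qed

lemma kap_step1: "i \<in> S \<Longrightarrow> v \<in> {0,1} \<Longrightarrow>
   kap i (pr i) v = kap i (pr i) (yS i (pr i)) + flip (sg i) v"
proof -
  assume iS: "i \<in> S" and v: "v \<in> {0,1}"
  have c: "(pr i, i, sg i) \<in> E" "t (pr i, i, sg i) = 1" using cyc_in[OF iS] by auto
  show ?thesis
  proof (cases "sg i")
    case Pos
    have "(pr i, i, Neg) \<in> E \<Longrightarrow> 2 \<le> t (pr i, i, Neg)"
      using t_pair[of "pr i" i] t_range[of "pr i" i Neg] c Pos by force
    then show ?thesis using c Pos v unfolding kap_def yS_def flip_def by auto
  next
    case Neg
    have "(pr i, i, Pos) \<in> E \<Longrightarrow> 2 \<le> t (pr i, i, Pos)"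
      using t_pair[of "pr i" i] t_range[of "pr i" i Pos] c Neg by force
    then show ?thesis using c Neg v unfolding kap_def yS_def flip_def by auto
  qed
qed

lemma kap_yS_lo: "i \<in> S \<Longrightarrow> kap i (pr i) (yS i (pr i)) = lo i (pr i)"
proof -
  assume iS: "i \<in> S"
  define v where "v = (if sg i = Pos then 1 else 0 :: int)"
  have "kap i (pr i) v = kap i (pr i) (yS i (pr i)) + 1"
    using kap_step1[OF iS, of v] unfolding v_def flip_def by auto
  then show ?thesis using kap_bounds[of i "pr i" v] kap_bounds[of i "pr i" "yS i (pr i)"] by auto
qed

lemma pr_src: "i \<in> S \<Longrightarrow> pr i \<in> src i"
  using cyc_in unfolding src_def by blast

lemma S_eval:
  assumes x01: "\<And>k. x k \<in> {0,1}" and iS: "i \<in> S" and xT: "\<And>k. k \<notin> S \<Longrightarrow> x k = cc k"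
  shows "ff x i = flip (sg i) (x (pr i))"
proof -
  define p where "p = pr i"
  have oth: "kap i k (x k) = kap i k (yS i k)" if "k \<in> UNIV - {p}" for k
  proof (cases "live k i")
    case True
    then obtain s where s: "(k,i,s) \<in> E" "t (k,i,s) = 1" unfolding live_def by auto
    have "k \<notin> S" using t_S[OF s] that unfolding p_def by auto
    then show ?thesis using xT[of k] True that unfolding yS_def p_def by auto
  next
    case False
    then show ?thesis using kap_dead[OF False x01[of k]] that unfolding yS_def p_def by auto
  qed
  have "ssum x i = kap i p (x p) + (\<Sum>k\<in>UNIV - {p}. kap i k (yS i k))"
    unfolding ssum_def by (subst sum_split[of _ p]) (simp add: oth)
  also have "kap i p (x p) = kap i p (yS i p) + flip (sg i) (x p)"
    using kap_step1[OF iS x01] unfolding p_def by simp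
  finally have "ssum x i = (\<Sum>k\<in>UNIV. kap i k (yS i k)) + flip (sg i) (x p)"
    by (subst sum_split[of _ p]) simp
  moreover have "th i = 1 + (\<Sum>k\<in>UNIV. kap i k (yS i k))" using iS unfolding th_def by simp
  moreover have "flip (sg i) (x p) \<in> {0,1}" using x01[of p] unfolding flip_def by auto
  ultimately show ?thesis unfolding ff_def p_def by auto
qed

lemma th_range: "src i \<noteq> {} \<Longrightarrow> LL i + 1 \<le> th i \<and> th i \<le> LL i + mm i"
proof (cases "i \<in> S")
  case False
  assume ne: "src i \<noteq> {}"
  then show ?thesis using False mm_pos[OF ne] unfolding th_def by auto
next
  case True
  have a: "LL i \<le> ssum (yS i) i" by (rule ssum_lo)
  have b: "ssum (yS i) i \<le> LL i + mm i - 1"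
    by (rule ssum_hi1[of "pr i" i "yS i", OF pr_src[OF True] kap_yS_lo[OF True]])
  show ?thesis using a b True unfolding th_def ssum_def by simp
qed

end

context constr begin

lemma hi_nonneg: "0 \<le> hi j" unfolding hi_def by auto

lemma hi_pos: "src i \<noteq> {} \<Longrightarrow> 1 \<le> hi i"
proof -
  assume ne: "src i \<noteq> {}"
  then obtain j s where "(j,i,s) \<in> E" unfolding src_def by auto
  then have "{(j, s). (j, i, s) \<in> E} \<noteq> {}" by auto
  moreover have "finite {(j, s). (j, i, s) \<in> E}" by simp
  ultimately have "indeg E i > 0" unfolding indeg_def by (simp add: card_gt_0_iff)
  then show ?thesis unfolding hi_def by auto
qed

lemma ff01: "ff x i \<in> {0,1}" unfolding ff_def by auto

lemma ff_src0: "src i = {} \<Longrightarrow> ff x i = 0"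
proof -
  assume e: "src i = {}"
  then have "i \<notin> S" using pr_src by auto
  then show ?thesis using T_eval0 e by blast
qed

lemma ff_box: "ff x \<in> box (\<lambda>_. 0) hi"
  unfolding box_def
proof (intro CollectI allI)
  fix i show "0 \<le> ff x i \<and> ff x i \<le> hi i"
    using ff01[of x i] ff_src0[of i x] hi_pos[of i] hi_nonneg[of i] by (cases "src i = {}") auto
qed

lemma is_fds_ff: "is_fds (\<lambda>_. 0) hi ff"
  unfolding is_fds_def using hi_nonneg ff_box by auto

lemma fp_T:
  assumes x01: "\<And>k. x k \<in> {0,1}" and fx: "ff x = x"
  shows "i \<notin> S \<Longrightarrow> x i = cc i"
proof (induction "rank i" arbitrary: i rule: less_induct)
  case less
  show ?case
  proof (cases "src i = {}")
    case True
    then show ?thesis using T_eval0[OF less.prems True, of x] fx by metis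
  next
    case False
    have "ff x i = cc i"
    proof (rule T_eval[OF x01 less.prems False])
      assume "live (can i) i"
      then have "can i \<notin> S" "rank (can i) < rank i" using can_prop[OF less.prems False] by auto
      then show "x (can i) = cc (can i)" using less.hyps by blast
    qed
    then show ?thesis using fx by metis
  qed
qed

lemma FP_iff: "x \<in> fixed_points (\<lambda>_. 0) hi ff \<longleftrightarrow>
  (\<forall>k. x k \<in> {0,1}) \<and> (\<forall>k. k \<notin> S \<longrightarrow> x k = cc k) \<and> (\<forall>k\<in>S. x k = flip (sg k) (x (pr k)))"
proof
  assume "x \<in> fixed_points (\<lambda>_. 0) hi ff"
  then have fx: "ff x = x" unfolding fixed_points_def by auto
  have x01: "\<And>k. x k \<in> {0,1}" using ff01[of x] fx by metis
  have xT: "\<And>k. k \<notin> S \<Longrightarrow> x k = cc k" using fp_T[OF x01 fx] .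
  have "\<And>k. k \<in> S \<Longrightarrow> x k = flip (sg k) (x (pr k))" using S_eval[OF x01 _ xT] fx by metis
  then show "(\<forall>k. x k \<in> {0,1}) \<and> (\<forall>k. k \<notin> S \<longrightarrow> x k = cc k) \<and> (\<forall>k\<in>S. x k = flip (sg k) (x (pr k)))"
    using x01 xT by blast
next
  assume "(\<forall>k. x k \<in> {0,1}) \<and> (\<forall>k. k \<notin> S \<longrightarrow> x k = cc k) \<and> (\<forall>k\<in>S. x k = flip (sg k) (x (pr k)))"
  then have x01: "\<And>k. x k \<in> {0,1}" and xT: "\<And>k. k \<notin> S \<Longrightarrow> x k = cc k"
    and xS: "\<And>k. k \<in> S \<Longrightarrow> x k = flip (sg k) (x (pr k))" by auto
  have fx: "ff x i = x i" for i
  proof (cases "i \<in> S")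
    case True then show ?thesis using S_eval[OF x01 True xT] xS[OF True] by simp
  next
    case iS: False
    show ?thesis
    proof (cases "src i = {}")
      case True then show ?thesis using T_eval0[OF iS True, of x] xT[OF iS] by simp
    next
      case False
      have "ff x i = cc i"
      proof (rule T_eval[OF x01 iS False])
        assume "live (can i) i"
        then have "can i \<notin> S" using can_prop[OF iS False] by auto
        then show "x (can i) = cc (can i)" using xT by blast
      qed
      then show ?thesis using xT[OF iS] by simp
    qed
  qed
  then have "ff x = x" by auto
  moreover have "x \<in> box (\<lambda>_. 0) hi" using ff_box[of x] calculation by simp
  ultimately show "x \<in> fixed_points (\<lambda>_. 0) hi ff" unfolding fixed_points_def by auto
qed

lemma IG_sub: "interaction_graph (\<lambda>_. 0) hi ff \<subseteq> E"
proof
  fix e assume "e \<in> interaction_graph (\<lambda>_. 0) hi ff"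
  then obtain j i s x where e: "e = (j,i,s)" and xb: "x \<in> box (\<lambda>_. 0) hi"
    and c: "(s = Pos \<and> ff (x(j := x j + 1)) i - ff x i > 0) \<or> (s = Neg \<and> ff (x(j := x j + 1)) i - ff x i < 0)"
    unfolding interaction_graph_def by auto
  have u: "ssum (x(j := x j + 1)) i = ssum x i - kap i j (x j) + kap i j (x j + 1)" by (rule ssum_upd)
  from c show "e \<in> E"
  proof
    assume "s = Pos \<and> ff (x(j := x j + 1)) i - ff x i > 0"
    then have "s = Pos" "th i \<le> ssum (x(j := x j + 1)) i" "\<not> th i \<le> ssum x i"
      unfolding ff_def by (auto split: if_splits)
    then have "kap i j (x j) < kap i j (x j + 1)" using u by linarith
    then show ?thesis using kap_incr e \<open>s = Pos\<close> by force
  next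
    assume "s = Neg \<and> ff (x(j := x j + 1)) i - ff x i < 0"
    then have "s = Neg" "\<not> th i \<le> ssum (x(j := x j + 1)) i" "th i \<le> ssum x i"
      unfolding ff_def by (auto split: if_splits)
    then have "kap i j (x j) > kap i j (x j + 1)" using u by linarith
    then show ?thesis using kap_decr e \<open>s = Neg\<close> by force
  qed
qed

lemma IG_sup: "E \<subseteq> interaction_graph (\<lambda>_. 0) hi ff"
proof
  fix e assume "e \<in> E"
  then obtain j i s where e: "e = (j,i,s)" and es: "(j,i,s) \<in> E" by (cases e) auto
  have js: "j \<in> src i" using es unfolding src_def by auto
  have ne: "src i \<noteq> {}" using js by auto
  have "\<forall>k\<in>src i. \<exists>vl vh. 0 \<le> vl \<and> vl \<le> hi k \<and> 0 \<le> vh \<and> vh \<le> hi k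
     \<and> kap i k vl = lo i k \<and> kap i k vh = lo i k + 1" using kap_wit by blast
  then obtain VL VH where V: "\<And>k. k \<in> src i \<Longrightarrow> 0 \<le> VL k \<and> VL k \<le> hi k \<and> 0 \<le> VH k \<and> VH k \<le> hi k
     \<and> kap i k (VL k) = lo i k \<and> kap i k (VH k) = lo i k + 1" by metis
  define n where "n = nat (th i - 1 - LL i)"
  have cs: "card (src i - {j}) = card (src i) - 1" using js by simp
  have "n \<le> card (src i - {j})" using th_range[OF ne] cs mm_pos[OF ne] unfolding n_def mm_def by auto
  then obtain A where A: "A \<subseteq> src i - {j}" "card A = n" "finite A"
    by (rule obtain_subset_with_card_n)
  define x where "x k = (if k = j then t (j,i,s) - 1 else if k \<in> src i then (if k \<in> A then VH k else VL k) else 0)" for k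
  have tr: "1 \<le> t (j,i,s)" "t (j,i,s) \<le> hi j" using t_range[OF es] hi_out[OF es] by auto
  have xb: "x \<in> box (\<lambda>_. 0) hi" unfolding box_def x_def using V tr hi_nonneg by auto
  have xj: "x j < hi j" using tr unfolding x_def by simp
  have oth: "kap i k (x k) = lo i k + of_bool (k \<in> A)" if "k \<in> UNIV - {j}" for k
  proof (cases "k \<in> src i")
    case True then show ?thesis using V[OF True] that unfolding x_def by auto
  next
    case False then show ?thesis using kap_nonsrc[OF False] A(1) that unfolding x_def by auto
  qed
  have "(\<Sum>k\<in>UNIV - {j}. kap i k (x k)) = (\<Sum>k\<in>UNIV - {j}. lo i k + of_bool (k \<in> A))"
    using oth by (rule sum.cong[OF refl])
  also have "\<dots> = (\<Sum>k\<in>UNIV - {j}. lo i k) + int (card A)"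
  proof -
    have "(UNIV - {j}) \<inter> A = A" using A(1) by blast
    then show ?thesis by (simp add: sum.distrib)
  qed
  also have "(\<Sum>k\<in>UNIV - {j}. lo i k) = LL i - lo i j" unfolding LL_def
    by (subst sum_split[of _ j]) simp
  finally have so: "ssum x i = kap i j (x j) + LL i - lo i j + int n"
    unfolding ssum_def A(2) by (subst sum_split[of _ j]) simp
  have nv: "int n = th i - 1 - LL i" using th_range[OF ne] unfolding n_def by simp
  have xu: "x(j := x j + 1) = x(j := t (j,i,s))" unfolding x_def by simp
  show "e \<in> interaction_graph (\<lambda>_. 0) hi ff"
  proof (cases s)
    case Pos
    have k: "kap i j (x j) = lo i j" "kap i j (t (j,i,s)) = lo i j + 1"
      using kap_at_pos[of j i] es Pos unfolding x_def by auto
    have "ssum x i = th i - 1" using so k nv by simp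
    moreover have "ssum (x(j := x j + 1)) i = th i" using ssum_upd calculation k xu by simp
    ultimately have "ff (x(j := x j + 1)) i - ff x i > 0" unfolding ff_def by simp
    then show ?thesis unfolding interaction_graph_def e using xb xj Pos by blast
  next
    case Neg
    have k: "kap i j (x j) = lo i j + 1" "kap i j (t (j,i,s)) = lo i j"
      using kap_at_neg[of j i] es Neg unfolding x_def by auto
    have "ssum x i = th i" using so k nv by simp
    moreover have "ssum (x(j := x j + 1)) i = th i - 1" using ssum_upd calculation k xu by simp
    ultimately have "ff (x(j := x j + 1)) i - ff x i < 0" unfolding ff_def by simp
    then show ?thesis unfolding interaction_graph_def e using xb xj Neg by blast
  qed
qed

lemma IG_eq: "interaction_graph (\<lambda>_. 0) hi ff = E"
  using IG_sub IG_sup by blast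

lemma deg_ff: "degree_bounded (\<lambda>_. 0) hi ff"
  unfolding degree_bounded_def IG_eq Let_def hi_def by auto

lemma main_constr: "\<exists>lo hi f. fds_on E lo hi f \<and> degree_bounded lo hi f \<and>
  (\<forall>k. k \<notin> S \<longrightarrow> cc k \<in> {0,1}) \<and> (\<forall>x. x \<in> fixed_points lo hi f \<longleftrightarrow>
    (\<forall>k. x k \<in> {0,1}) \<and> (\<forall>k. k \<notin> S \<longrightarrow> x k = cc k) \<and> (\<forall>k\<in>S. x k = flip (sg k) (x (pr k))))"
  using is_fds_ff IG_eq deg_ff FP_iff cc01 unfolding fds_on_def by blast

end

lemma mod_pred_succ: "0 < (N::nat) \<Longrightarrow> q < N \<Longrightarrow> ((q + N - 1) mod N + 1) mod N = q"
proof -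
  assume N: "0 < N" and q: "q < N"
  show ?thesis
  proof (cases q)
    case 0
    then show ?thesis using N by (simp add: Suc_diff_1 mod_Suc)
  next
    case (Suc r)
    then have "q + N - 1 = r + N" by simp
    then have "(q + N - 1) mod N = r" using q Suc by simp
    then show ?thesis using q Suc by simp
  qed
qed

lemma mod_succ_pred: "0 < (N::nat) \<Longrightarrow> q < N \<Longrightarrow> ((q + 1) mod N + N - 1) mod N = q"
proof -
  assume N: "0 < N" and q: "q < N"
  show ?thesis
  proof (cases "q + 1 = N")
    case True then show ?thesis using N by simp
  next
    case False
    then have "(q + 1) mod N = q + 1" using q by simp
    then show ?thesis using q by simp
  qed
qed

lemma steps_des:
  assumes fin: "finite Ar" and a: "a \<in> Ar"
  shows "\<exists>tj. tj a = (1::int) \<and> (\<forall>u\<in>Ar. u \<noteq> a \<longrightarrow> 2 \<le> tj u) \<and> (\<forall>u\<in>Ar. 1 \<le> tj u \<and> tj u \<le> int (card Ar)) \<and> inj_on tj Ar"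
proof -
  obtain h where h: "bij_betw h (Ar - {a}) {0..<card (Ar - {a})}"
    using ex_bij_betw_finite_nat[of "Ar - {a}"] fin by auto
  have cO: "card (Ar - {a}) = card Ar - 1" using a fin by simp
  have "card Ar > 0" using a fin card_gt_0_iff by blast
  then have cpos: "1 \<le> card Ar" by simp
  define tj where "tj u = (if u = a then 1 else int (h u) + 2)" for u
  have hr: "u \<in> Ar - {a} \<Longrightarrow> h u < card Ar - 1" for u using h cO unfolding bij_betw_def by auto
  have "\<forall>u\<in>Ar. 1 \<le> tj u \<and> tj u \<le> int (card Ar)"
  proof
    fix u assume "u \<in> Ar"
    then show "1 \<le> tj u \<and> tj u \<le> int (card Ar)" using hr[of u] cpos unfolding tj_def by auto
  qed
  moreover have "inj_on tj Ar"
  proof (rule inj_onI)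
    fix u u2 assume u: "u \<in> Ar" "u2 \<in> Ar" "tj u = tj u2"
    have ih: "inj_on h (Ar - {a})" using h bij_betw_def by blast
    show "u = u2"
    proof (cases "u = a")
      case True then show ?thesis using u unfolding tj_def by (cases "u2 = a") auto
    next
      case False
      show ?thesis
      proof (cases "u2 = a")
        case True then show ?thesis using u False unfolding tj_def by auto
      next
        case F2: False
        then have "h u = h u2" using u False unfolding tj_def by auto
        then show ?thesis using ih u False F2 unfolding inj_on_def by blast
      qed
    qed
  qed
  moreover have "tj a = 1" "\<forall>u\<in>Ar. u \<noteq> a \<longrightarrow> 2 \<le> tj u" unfolding tj_def by auto
  ultimately show ?thesis by blast
qed

lemma steps_nt:
  assumes fin: "finite Ar" and a: "a \<in> Ar" and b: "b \<in> Ar" and ab: "fst a \<noteq> fst b"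
  shows "\<exists>tj. (\<forall>u\<in>Ar. 2 \<le> tj u \<and> tj u \<le> int (card Ar)) \<and>
    (\<forall>u\<in>Ar. \<forall>u2\<in>Ar. u \<noteq> u2 \<and> tj u = tj u2 \<longrightarrow> fst u \<noteq> fst u2)"
proof -
  have anb: "a \<noteq> b" using ab by auto
  obtain h where h: "bij_betw h (Ar - {a,b}) {0..<card (Ar - {a,b})}"
    using ex_bij_betw_finite_nat[of "Ar - {a,b}"] fin by auto
  have cO: "card (Ar - {a,b}) = card Ar - 2" using a b anb fin by (simp add: card_Diff_subset)
  have c2: "2 \<le> card Ar"
  proof -
    have "{a,b} \<subseteq> Ar" using a b by auto
    then have "card {a,b} \<le> card Ar" using card_mono[OF fin] by blast
    then show ?thesis using anb by simp
  qed
  define tj where "tj u = (if u = a \<or> u = b then 2 else int (h u) + 3)" for u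
  have hr: "u \<in> Ar - {a,b} \<Longrightarrow> h u < card Ar - 2" for u using h cO unfolding bij_betw_def by auto
  have "\<forall>u\<in>Ar. 2 \<le> tj u \<and> tj u \<le> int (card Ar)"
  proof
    fix u assume "u \<in> Ar"
    then show "2 \<le> tj u \<and> tj u \<le> int (card Ar)" using hr[of u] c2 unfolding tj_def by auto
  qed
  moreover have "\<forall>u\<in>Ar. \<forall>u2\<in>Ar. u \<noteq> u2 \<and> tj u = tj u2 \<longrightarrow> fst u \<noteq> fst u2"
  proof (intro ballI impI)
    fix u u2 assume u: "u \<in> Ar" "u2 \<in> Ar" "u \<noteq> u2 \<and> tj u = tj u2"
    show "fst u \<noteq> fst u2"
    proof (cases "u \<in> {a,b} \<and> u2 \<in> {a,b}")
      case True then show ?thesis using u ab by auto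
    next
      case False
      have ih: "inj_on h (Ar - {a,b})" using h bij_betw_def by blast
      show ?thesis
      proof (cases "u \<in> {a,b} \<or> u2 \<in> {a,b}")
        case True
        then show ?thesis using u False unfolding tj_def by auto
      next
        case F2: False
        then have "h u = h u2" using u unfolding tj_def by auto
        then show ?thesis using ih u F2 unfolding inj_on_def by blast
      qed
    qed
  qed
  ultimately show ?thesis by blast
qed

locale cycs =
  fixes E :: "('v::finite) sdigraph" and Cs :: "('v \<times> sign) list list"
  assumes conn: "sconnected E" and Cne: "Cs \<noteq> []"
    and cyc: "\<forall>c\<in>set Cs. is_cycle E c"
    and disj: "\<forall>a<length Cs. \<forall>b<length Cs. a \<noteq> b \<longrightarrow> cycle_vertices (Cs!a) \<inter> cycle_vertices (Cs!b) = {}"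
begin

definition NN :: "nat \<Rightarrow> nat" where "NN a = length (Cs!a)"
definition VV :: "nat \<Rightarrow> nat \<Rightarrow> 'v" where "VV a q = fst (Cs!a!q)"
definition SS :: "'v set" where "SS = {VV a q | a q. a < length Cs \<and> q < NN a}"

lemma cyc_a: "a < length Cs \<Longrightarrow> is_cycle E (Cs!a)"
  using cyc nth_mem by blast

lemma NN_pos: "a < length Cs \<Longrightarrow> 0 < NN a"
  using cyc_a unfolding is_cycle_def NN_def by auto

lemma VV_arc: "a < length Cs \<Longrightarrow> q < NN a \<Longrightarrow> (VV a q, VV a ((q+1) mod NN a), snd (Cs!a!q)) \<in> E"
  using cyc_a unfolding is_cycle_def NN_def VV_def by auto

lemma VV_S: "a < length Cs \<Longrightarrow> q < NN a \<Longrightarrow> VV a q \<in> SS"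
  unfolding SS_def by auto

lemma VV_inj:
  assumes "a < length Cs" "q < NN a" "a' < length Cs" "q' < NN a'" "VV a q = VV a' q'"
  shows "a = a' \<and> q = q'"
proof -
  have m: "VV b r \<in> cycle_vertices (Cs!b)" if "r < NN b" for b r
    using that unfolding cycle_vertices_def VV_def NN_def by (metis length_map nth_map nth_mem)
  have aa: "a = a'"
  proof (rule ccontr)
    assume "a \<noteq> a'"
    then have "cycle_vertices (Cs!a) \<inter> cycle_vertices (Cs!a') = {}" using disj assms by blast
    then show False using m[OF assms(2)] m[OF assms(4)] assms(5) by auto
  qed
  have d: "distinct (map fst (Cs!a))" using cyc_a[OF assms(1)] unfolding is_cycle_def by simp
  have "map fst (Cs!a) ! q = map fst (Cs!a) ! q'"
    using assms aa unfolding VV_def NN_def by simp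
  moreover have "q < length (map fst (Cs!a))" "q' < length (map fst (Cs!a))"
    using assms aa unfolding NN_def by auto
  ultimately have "q = q'" using nth_eq_iff_index_eq[OF d] by blast
  then show ?thesis using aa by simp
qed

definition pos :: "'v \<Rightarrow> nat \<times> nat" where
  "pos i = (SOME p. fst p < length Cs \<and> snd p < NN (fst p) \<and> VV (fst p) (snd p) = i)"

lemma pos_S: "i \<in> SS \<Longrightarrow> fst (pos i) < length Cs \<and> snd (pos i) < NN (fst (pos i)) \<and> VV (fst (pos i)) (snd (pos i)) = i"
proof -
  assume "i \<in> SS"
  then obtain a q where "a < length Cs" "q < NN a" "VV a q = i" unfolding SS_def by auto
  then have "\<exists>p. fst p < length Cs \<and> snd p < NN (fst p) \<and> VV (fst p) (snd p) = i"
    by (intro exI[of _ "(a,q)"]) simp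
  then show ?thesis unfolding pos_def by (rule someI_ex)
qed

lemma pos_VV: "a < length Cs \<Longrightarrow> q < NN a \<Longrightarrow> pos (VV a q) = (a,q)"
proof -
  assume a: "a < length Cs" and q: "q < NN a"
  have p: "fst (pos (VV a q)) < length Cs \<and> snd (pos (VV a q)) < NN (fst (pos (VV a q))) \<and>
    VV (fst (pos (VV a q))) (snd (pos (VV a q))) = VV a q" using pos_S[OF VV_S[OF a q]] .
  then show ?thesis using VV_inj[OF _ _ a q, of "fst (pos (VV a q))" "snd (pos (VV a q))"]
    by (metis prod.collapse)
qed

definition prv :: "'v \<Rightarrow> 'v" where
  "prv i = VV (fst (pos i)) ((snd (pos i) + NN (fst (pos i)) - 1) mod NN (fst (pos i)))"
definition sgv :: "'v \<Rightarrow> sign" where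
  "sgv i = snd (Cs ! fst (pos i) ! ((snd (pos i) + NN (fst (pos i)) - 1) mod NN (fst (pos i))))"
definition des :: "'v \<Rightarrow> 'v \<times> sign" where
  "des j = (VV (fst (pos j)) ((snd (pos j) + 1) mod NN (fst (pos j))), snd (Cs ! fst (pos j) ! snd (pos j)))"
definition Outs :: "'v \<Rightarrow> ('v \<times> sign) set" where "Outs j = {(i,s). (j,i,s) \<in> E}"

lemma des_out: "j \<in> SS \<Longrightarrow> des j \<in> Outs j"
  using pos_S[of j] VV_arc[of "fst (pos j)" "snd (pos j)"] unfolding des_def Outs_def by auto

lemma pr_des: "j \<in> SS \<Longrightarrow> des j = (i,s) \<Longrightarrow> i \<in> SS \<and> prv i = j \<and> sgv i = s"
proof -
  assume j: "j \<in> SS" and d: "des j = (i,s)"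
  obtain a q where aq: "pos j = (a,q)" by (cases "pos j")
  have a: "a < length Cs" and q: "q < NN a" and v: "VV a q = j" using pos_S[OF j] aq by auto
  have N: "0 < NN a" using NN_pos[OF a] .
  have q1: "(q+1) mod NN a < NN a" using N by simp
  have i: "i = VV a ((q+1) mod NN a)" and s: "s = snd (Cs!a!q)" using d aq unfolding des_def by auto
  have pi: "pos i = (a, (q+1) mod NN a)" using pos_VV[OF a q1] i by simp
  show ?thesis using VV_S[OF a q1] i pi v s mod_succ_pred[OF N q] unfolding prv_def sgv_def by simp
qed

lemma des_pr: "i \<in> SS \<Longrightarrow> prv i \<in> SS \<and> des (prv i) = (i, sgv i) \<and> (prv i, i, sgv i) \<in> E"
proof -
  assume i: "i \<in> SS"
  obtain a q where aq: "pos i = (a,q)" by (cases "pos i")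
  have a: "a < length Cs" and q: "q < NN a" and v: "VV a q = i" using pos_S[OF i] aq by auto
  have N: "0 < NN a" using NN_pos[OF a] .
  define k where "k = (q + NN a - 1) mod NN a"
  have k: "k < NN a" using N unfolding k_def by simp
  have k1: "(k + 1) mod NN a = q" using mod_pred_succ[OF N q] unfolding k_def .
  have p: "prv i = VV a k" "sgv i = snd (Cs!a!k)" using aq unfolding prv_def sgv_def k_def by auto
  have pk: "pos (VV a k) = (a,k)" using pos_VV[OF a k] .
  show ?thesis using VV_S[OF a k] p pk k1 v VV_arc[OF a k] unfolding des_def by simp
qed

definition Pj :: "'v \<Rightarrow> ('v \<times> sign \<Rightarrow> int) \<Rightarrow> bool" where
  "Pj j tj \<longleftrightarrow> (\<forall>u\<in>Outs j. 1 \<le> tj u \<and> tj u \<le> int (card (Outs j)))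
     \<and> (\<forall>u\<in>Outs j. \<forall>u2\<in>Outs j. u \<noteq> u2 \<and> tj u = tj u2 \<longrightarrow> fst u \<noteq> fst u2)
     \<and> (j \<in> SS \<longrightarrow> tj (des j) = 1 \<and> (\<forall>u\<in>Outs j. u \<noteq> des j \<longrightarrow> 2 \<le> tj u))
     \<and> (j \<notin> SS \<longrightarrow> (\<forall>u\<in>Outs j. tj u = 1 \<longrightarrow> (\<forall>u2\<in>Outs j. fst u2 = fst u)))"

lemma fin_Outs: "finite (Outs j)" by simp

lemma ex_tj: "\<exists>tj. Pj j tj"
proof (cases "j \<in> SS")
  case True
  obtain tj where tj: "tj (des j) = 1" "\<forall>u\<in>Outs j. u \<noteq> des j \<longrightarrow> 2 \<le> tj u"
    "\<forall>u\<in>Outs j. 1 \<le> tj u \<and> tj u \<le> int (card (Outs j))" "inj_on tj (Outs j)"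
    using steps_des[OF fin_Outs des_out[OF True]] by blast
  have "\<forall>u\<in>Outs j. \<forall>u2\<in>Outs j. u \<noteq> u2 \<and> tj u = tj u2 \<longrightarrow> fst u \<noteq> fst u2"
    using tj(4) unfolding inj_on_def by blast
  then show ?thesis using tj True unfolding Pj_def by blast
next
  case nS: False
  show ?thesis
  proof (cases "\<forall>u\<in>Outs j. \<forall>u2\<in>Outs j. fst u2 = fst u")
    case True
    show ?thesis
    proof (cases "Outs j = {}")
      case True then show ?thesis unfolding Pj_def using nS by auto
    next
      case False
      then obtain a where a: "a \<in> Outs j" by auto
      obtain tj where tj: "\<forall>u\<in>Outs j. 1 \<le> tj u \<and> tj u \<le> int (card (Outs j))" "inj_on tj (Outs j)"
        using steps_des[OF fin_Outs a] by blast
      have "\<forall>u\<in>Outs j. \<forall>u2\<in>Outs j. u \<noteq> u2 \<and> tj u = tj u2 \<longrightarrow> fst u \<noteq> fst u2"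
        using tj(2) unfolding inj_on_def by blast
      then show ?thesis using tj True nS unfolding Pj_def by blast
    qed
  next
    case False
    then obtain a b where ab: "a \<in> Outs j" "b \<in> Outs j" "fst a \<noteq> fst b" by auto
    obtain tj where tj: "\<forall>u\<in>Outs j. 2 \<le> tj u \<and> tj u \<le> int (card (Outs j))"
      "\<forall>u\<in>Outs j. \<forall>u2\<in>Outs j. u \<noteq> u2 \<and> tj u = tj u2 \<longrightarrow> fst u \<noteq> fst u2"
      using steps_nt[OF fin_Outs ab] by blast
    have "\<forall>u\<in>Outs j. 1 \<le> tj u \<and> tj u \<le> int (card (Outs j))" using tj(1) by force
    moreover have "\<forall>u\<in>Outs j. tj u \<noteq> 1" using tj(1) by force
    ultimately show ?thesis using tj(2) nS unfolding Pj_def by blast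
  qed
qed

lemma ex_t: "\<exists>t. constr E SS prv sgv t"
proof -
  obtain T where T: "\<And>j. Pj j (T j)" using ex_tj by metis
  define t where "t e = T (fst e) (snd e)" for e :: "'v \<times> 'v \<times> sign"
  have out: "(j,i,s) \<in> E \<longleftrightarrow> (i,s) \<in> Outs j" for j i s unfolding Outs_def by simp
  have od: "outdeg E j = card (Outs j)" for j unfolding outdeg_def Outs_def by simp
  have "constr E SS prv sgv t"
  proof (rule constr.intro)
    show "sconnected E" using conn .
  next
    show "SS \<noteq> {}" using VV_S[of 0 0] Cne NN_pos[of 0] by auto
  next
    fix i assume i: "i \<in> SS"
    then show "(prv i, i, sgv i) \<in> E \<and> prv i \<in> SS \<and> t (prv i, i, sgv i) = 1"
      using des_pr[OF i] T[of "prv i"] unfolding Pj_def t_def by auto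
  next
    fix j i s assume "(j,i,s) \<in> E"
    then show "1 \<le> t (j,i,s) \<and> t (j,i,s) \<le> int (outdeg E j)"
      using T[of j] unfolding Pj_def t_def od out by auto
  next
    fix j i assume "(j,i,Pos) \<in> E" "(j,i,Neg) \<in> E"
    then show "t (j,i,Pos) \<noteq> t (j,i,Neg)" using T[of j] unfolding Pj_def t_def out by fastforce
  next
    fix j i s assume e: "(j,i,s) \<in> E" and t1: "t (j,i,s) = 1" and j: "j \<in> SS"
    have "(i,s) = des j"
    proof (rule ccontr)
      assume "(i,s) \<noteq> des j"
      then show False using T[of j] e t1 j unfolding Pj_def t_def out by fastforce
    qed
    then show "i \<in> SS \<and> prv i = j \<and> sgv i = s" using pr_des[OF j] by metis
  next
    fix j i s i' s' assume "(j,i,s) \<in> E" "t (j,i,s) = 1" "j \<notin> SS" "(j,i',s') \<in> E"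
    then show "i' = i" using T[of j] unfolding Pj_def t_def out by fastforce
  qed
  then show ?thesis by blast
qed

lemma rule_iff:
  "(\<forall>k\<in>SS. x k = flip (sgv k) (x (prv k))) \<longleftrightarrow>
   (\<forall>a<length Cs. \<forall>q<NN a. x (VV a ((q+1) mod NN a)) = flip (snd (Cs!a!q)) (x (VV a q)))"
proof
  assume h: "\<forall>k\<in>SS. x k = flip (sgv k) (x (prv k))"
  show "\<forall>a<length Cs. \<forall>q<NN a. x (VV a ((q+1) mod NN a)) = flip (snd (Cs!a!q)) (x (VV a q))"
  proof (intro allI impI)
    fix a q assume a: "a < length Cs" and q: "q < NN a"
    have N: "0 < NN a" using NN_pos[OF a] .
    have "des (VV a q) = (VV a ((q+1) mod NN a), snd (Cs!a!q))"
      using pos_VV[OF a q] unfolding des_def by simp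
    then have "VV a ((q+1) mod NN a) \<in> SS \<and> prv (VV a ((q+1) mod NN a)) = VV a q \<and> sgv (VV a ((q+1) mod NN a)) = snd (Cs!a!q)"
      using pr_des[OF VV_S[OF a q]] by blast
    then show "x (VV a ((q+1) mod NN a)) = flip (snd (Cs!a!q)) (x (VV a q))" using h by metis
  qed
next
  assume h: "\<forall>a<length Cs. \<forall>q<NN a. x (VV a ((q+1) mod NN a)) = flip (snd (Cs!a!q)) (x (VV a q))"
  show "\<forall>k\<in>SS. x k = flip (sgv k) (x (prv k))"
  proof
    fix k assume k: "k \<in> SS"
    have d: "prv k \<in> SS" "des (prv k) = (k, sgv k)" using des_pr[OF k] by auto
    obtain a q where aq: "pos (prv k) = (a,q)" by (cases "pos (prv k)")
    have a: "a < length Cs" and q: "q < NN a" and v: "VV a q = prv k" using pos_S[OF d(1)] aq by auto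
    have "k = VV a ((q+1) mod NN a)" "sgv k = snd (Cs!a!q)" using d(2) aq unfolding des_def by auto
    then show "x k = flip (sgv k) (x (prv k))" using h a q v by metis
  qed
qed

lemma ex_fds: "\<exists>lo hi f c. fds_on E lo hi f \<and> degree_bounded lo hi f \<and>
  (\<forall>k. k \<notin> SS \<longrightarrow> c k \<in> {0,1}) \<and> (\<forall>x. x \<in> fixed_points lo hi f \<longleftrightarrow>
    (\<forall>k. x k \<in> {0,1}) \<and> (\<forall>k. k \<notin> SS \<longrightarrow> x k = c k) \<and>
    (\<forall>a<length Cs. \<forall>q<NN a. x (VV a ((q+1) mod NN a)) = flip (snd (Cs!a!q)) (x (VV a q))))"
proof -
  obtain t where t: "constr E SS prv sgv t" using ex_t by blast
  show ?thesis using constr.main_constr[OF t] unfolding rule_iff by blast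
qed

end

definition negc :: "('v \<times> sign) list \<Rightarrow> nat \<Rightarrow> nat" where
  "negc c q = length (filter (\<lambda>s. s = Neg) (take q (map snd c)))"

lemma negc_0: "negc c 0 = 0" unfolding negc_def by simp

lemma negc_Suc: "q < length c \<Longrightarrow> negc c (Suc q) = negc c q + (if snd (c!q) = Neg then 1 else 0)"
  unfolding negc_def by (simp add: take_Suc_conv_app_nth)

lemma negc_full: "negc c (length c) = length (filter (\<lambda>s. s = Neg) (map snd c))"
  unfolding negc_def by simp

lemma flip_mod: "v \<in> {0,1} \<Longrightarrow> flip s v = (v + (if s = Neg then 1 else 0)) mod 2"
  unfolding flip_def by (cases s) auto

lemma cyc_sol:
  fixes y :: "nat \<Rightarrow> int"
  assumes n: "0 < length c" and y01: "\<And>q. q < length c \<Longrightarrow> y q \<in> {0,1}"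
  shows "(\<forall>q<length c. y ((q+1) mod length c) = flip (snd (c!q)) (y q)) \<longleftrightarrow>
         (\<forall>q<length c. y q = (y 0 + int (negc c q)) mod 2) \<and> even (negc c (length c))"
proof
  assume h: "\<forall>q<length c. y ((q+1) mod length c) = flip (snd (c!q)) (y q)"
  have y0: "y 0 \<in> {0,1}" using y01 n by simp
  have ind: "q < length c \<Longrightarrow> y q = (y 0 + int (negc c q)) mod 2" for q
  proof (induction q)
    case 0 then show ?case using y0 by (auto simp: negc_0)
  next
    case (Suc q)
    then have q: "q < length c" by simp
    have "y (Suc q) = flip (snd (c!q)) (y q)" using h q Suc.prems by (metis Suc_eq_plus1 mod_less)
    also have "\<dots> = (y q + (if snd (c!q) = Neg then 1 else 0)) mod 2" using flip_mod y01[OF q] by simp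
    also have "\<dots> = (y 0 + int (negc c (Suc q))) mod 2" using Suc.IH[OF q] negc_Suc[OF q]
      by (simp add: mod_add_left_eq add.assoc)
    finally show ?case .
  qed
  have l: "length c - 1 < length c" using n by simp
  have w: "(length c - 1 + 1) mod length c = 0" using n by simp
  have "y 0 = flip (snd (c!(length c - 1))) (y (length c - 1))" using h l w by metis
  also have "\<dots> = (y (length c - 1) + (if snd (c!(length c - 1)) = Neg then 1 else 0)) mod 2"
    using flip_mod y01[OF l] by simp
  also have "\<dots> = (y 0 + int (negc c (length c))) mod 2"
    using ind[OF l] negc_Suc[OF l] n by (simp add: mod_add_left_eq add.assoc)
  finally have "y 0 = (y 0 + int (negc c (length c))) mod 2" .
  then have "even (int (negc c (length c)))" using y0 by auto presburger+
  then show "(\<forall>q<length c. y q = (y 0 + int (negc c q)) mod 2) \<and> even (negc c (length c))"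
    using ind by simp
next
  assume h: "(\<forall>q<length c. y q = (y 0 + int (negc c q)) mod 2) \<and> even (negc c (length c))"
  have y0: "y 0 \<in> {0,1}" using y01 n by simp
  show "\<forall>q<length c. y ((q+1) mod length c) = flip (snd (c!q)) (y q)"
  proof (intro allI impI)
    fix q assume q: "q < length c"
    have fq: "flip (snd (c!q)) (y q) = (y 0 + int (negc c (Suc q))) mod 2"
      using flip_mod[OF y01[OF q]] h q negc_Suc[OF q] by (simp add: mod_add_left_eq add.assoc)
    show "y ((q+1) mod length c) = flip (snd (c!q)) (y q)"
    proof (cases "q + 1 = length c")
      case True
      obtain m where m: "negc c (length c) = 2 * m" using h by blast
      have "(y 0 + int (negc c (Suc q))) mod 2 = y 0" using True m y0 by auto
      then show ?thesis using fq True by simp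
    next
      case False
      then have "(q+1) mod length c = Suc q" "Suc q < length c" using q by auto
      then show ?thesis using fq h by simp
    qed
  qed
qed

context cycs begin

lemma count_pos:
  assumes pos: "\<forall>c\<in>set Cs. cycle_positive c" and cv01: "\<And>k. k \<notin> SS \<Longrightarrow> cv k \<in> {0,1}"
  shows "card {x. (\<forall>k. x k \<in> {0,1}) \<and> (\<forall>k. k \<notin> SS \<longrightarrow> x k = cv k) \<and>
    (\<forall>a<length Cs. \<forall>q<NN a. x (VV a ((q+1) mod NN a)) = flip (snd (Cs!a!q)) (x (VV a q)))} = 2 ^ length Cs"
    (is "card ?F = _")
proof -
  define Psi where "Psi B v = (if v \<in> SS then (of_bool (fst (pos v) \<in> B) + int (negc (Cs ! fst (pos v)) (snd (pos v)))) mod 2 else cv v)"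
    for B :: "nat set" and v
  have PsiV: "Psi B (VV a q) = (of_bool (a \<in> B) + int (negc (Cs!a) q)) mod 2" if "a < length Cs" "q < NN a" for B a q
    using pos_VV[OF that] VV_S[OF that] unfolding Psi_def by simp
  have ev: "even (negc (Cs!a) (length (Cs!a)))" if "a < length Cs" for a
    using pos that unfolding cycle_positive_def negc_full by simp
  have rules_iff: "(\<forall>q<NN a. x (VV a ((q+1) mod NN a)) = flip (snd (Cs!a!q)) (x (VV a q))) \<longleftrightarrow>
     (\<forall>q<NN a. x (VV a q) = (x (VV a 0) + int (negc (Cs!a) q)) mod 2) \<and> even (negc (Cs!a) (NN a))"
    if "a < length Cs" "\<And>k. x k \<in> {0,1}" for a x
    using cyc_sol[of "Cs!a" "\<lambda>q. x (VV a q)"] NN_pos[OF that(1)] that(2) unfolding NN_def by simp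
  have img: "Psi ` Pow {0..<length Cs} = ?F"
  proof
    show "Psi ` Pow {0..<length Cs} \<subseteq> ?F"
    proof
      fix x assume "x \<in> Psi ` Pow {0..<length Cs}"
      then obtain B where B: "B \<subseteq> {0..<length Cs}" "x = Psi B" by auto
      have x01: "\<And>k. x k \<in> {0,1}" using B(2) cv01 unfolding Psi_def by auto
      have xT: "\<And>k. k \<notin> SS \<Longrightarrow> x k = cv k" using B(2) unfolding Psi_def by auto
      have "\<forall>a<length Cs. \<forall>q<NN a. x (VV a ((q+1) mod NN a)) = flip (snd (Cs!a!q)) (x (VV a q))"
      proof (intro allI impI)
        fix a q assume a: "a < length Cs" and q: "q < NN a"
        have "x (VV a 0) = of_bool (a \<in> B)" using PsiV[OF a NN_pos[OF a]] B(2) by (simp add: negc_0)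
        then have "\<forall>q<NN a. x (VV a q) = (x (VV a 0) + int (negc (Cs!a) q)) mod 2"
          using PsiV[OF a] B(2) by simp
        then have "\<forall>q<NN a. x (VV a ((q+1) mod NN a)) = flip (snd (Cs!a!q)) (x (VV a q))"
          using rules_iff[of a x, OF a x01] ev[OF a] unfolding NN_def by simp
        then show "x (VV a ((q+1) mod NN a)) = flip (snd (Cs!a!q)) (x (VV a q))" using q by blast
      qed
      then show "x \<in> ?F" using x01 xT by blast
    qed
  next
    show "?F \<subseteq> Psi ` Pow {0..<length Cs}"
    proof
      fix x assume "x \<in> ?F"
      then have x01: "\<And>k. x k \<in> {0,1}" and xT: "\<And>k. k \<notin> SS \<Longrightarrow> x k = cv k"
        and r: "\<And>a. a < length Cs \<Longrightarrow> \<forall>q<NN a. x (VV a ((q+1) mod NN a)) = flip (snd (Cs!a!q)) (x (VV a q))"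
        by auto
      define B where "B = {a. a < length Cs \<and> x (VV a 0) = 1}"
      have "x = Psi B"
      proof
        fix v show "x v = Psi B v"
        proof (cases "v \<in> SS")
          case False then show ?thesis using xT unfolding Psi_def by simp
        next
          case True
          obtain a q where aq: "pos v = (a,q)" by (cases "pos v")
          have a: "a < length Cs" and q: "q < NN a" and vv: "VV a q = v" using pos_S[OF True] aq by auto
          have "x (VV a q) = (x (VV a 0) + int (negc (Cs!a) q)) mod 2"
            using rules_iff[of a x, OF a x01] r[OF a] q by blast
          moreover have "x (VV a 0) = of_bool (a \<in> B)" using x01[of "VV a 0"] a unfolding B_def by auto
          ultimately show ?thesis using PsiV[OF a q] vv by simp
        qed
      qed
      moreover have "B \<in> Pow {0..<length Cs}" unfolding B_def by auto
      ultimately show "x \<in> Psi ` Pow {0..<length Cs}" by blast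
    qed
  qed
  have inj: "inj_on Psi (Pow {0..<length Cs})"
  proof (rule inj_onI)
    fix B B' assume B: "B \<in> Pow {0..<length Cs}" and B': "B' \<in> Pow {0..<length Cs}" and eq: "Psi B = Psi B'"
    have "a \<in> B \<longleftrightarrow> a \<in> B'" if a: "a < length Cs" for a
    proof -
      have "Psi B (VV a 0) = Psi B' (VV a 0)" using eq by simp
      then have "of_bool (a \<in> B) mod 2 = (of_bool (a \<in> B') mod 2 :: int)"
        using PsiV[OF a NN_pos[OF a]] by (simp add: negc_0)
      then show ?thesis by (auto split: if_splits)
    qed
    then show "B = B'" using B B' by auto
  qed
  have "card ?F = card (Pow {0..<length Cs})" using card_image[OF inj] img by simp
  also have "\<dots> = 2 ^ length Cs" by (simp add: card_Pow)
  finally show ?thesis .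
qed

lemma count_neg:
  assumes "Cs = [c]" "\<not> cycle_positive c"
  shows "{x. (\<forall>k. x k \<in> {0,1}) \<and> (\<forall>k. k \<notin> SS \<longrightarrow> x k = cv k) \<and>
    (\<forall>a<length Cs. \<forall>q<NN a. x (VV a ((q+1) mod NN a)) = flip (snd (Cs!a!q)) (x (VV a q)))} = {}"
proof -
  have "False" if x01: "\<And>k. x k \<in> {0,1}" and
    r: "\<forall>a<length Cs. \<forall>q<NN a. x (VV a ((q+1) mod NN a)) = flip (snd (Cs!a!q)) (x (VV a q))" for x
  proof -
    have a: "0 < length Cs" using assms by simp
    have "even (negc (Cs!0) (NN 0))"
      using cyc_sol[of "Cs!0" "\<lambda>q. x (VV 0 q)"] NN_pos[OF a] x01 r a unfolding NN_def by auto
    then show False using assms unfolding cycle_positive_def negc_full NN_def by simp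
  qed
  then show ?thesis by blast
qed

end

lemma gen:
  fixes E :: "('v::finite) sdigraph"
  assumes conn: "sconnected E" and ne: "Cs \<noteq> []" and cy: "\<forall>c\<in>set Cs. is_cycle E c"
    and dj: "\<forall>a<length Cs. \<forall>b<length Cs. a \<noteq> b \<longrightarrow> cycle_vertices (Cs!a) \<inter> cycle_vertices (Cs!b) = {}"
  shows "\<exists>lo hi f. fds_on E lo hi f \<and> degree_bounded lo hi f \<and>
    ((\<forall>c\<in>set Cs. cycle_positive c) \<longrightarrow> card (fixed_points lo hi f) = 2 ^ length Cs) \<and>
    ((\<exists>c. Cs = [c] \<and> \<not> cycle_positive c) \<longrightarrow> fixed_points lo hi f = {})"
proof -
  interpret cycs E Cs using conn ne cy dj by (rule cycs.intro)
  obtain lo hi f cv where h: "fds_on E lo hi f" "degree_bounded lo hi f"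
    "\<forall>k. k \<notin> SS \<longrightarrow> cv k \<in> {0,1}"
    "\<forall>x. x \<in> fixed_points lo hi f \<longleftrightarrow>
    (\<forall>k. x k \<in> {0,1}) \<and> (\<forall>k. k \<notin> SS \<longrightarrow> x k = cv k) \<and>
    (\<forall>a<length Cs. \<forall>q<NN a. x (VV a ((q+1) mod NN a)) = flip (snd (Cs!a!q)) (x (VV a q)))"
    using ex_fds by blast
  have FP: "fixed_points lo hi f = {x. (\<forall>k. x k \<in> {0,1}) \<and> (\<forall>k. k \<notin> SS \<longrightarrow> x k = cv k) \<and>
    (\<forall>a<length Cs. \<forall>q<NN a. x (VV a ((q+1) mod NN a)) = flip (snd (Cs!a!q)) (x (VV a q)))}"
    using h(4) by blast
  have "(\<forall>c\<in>set Cs. cycle_positive c) \<longrightarrow> card (fixed_points lo hi f) = 2 ^ length Cs"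
    using count_pos[of cv] h(3) unfolding FP by blast
  moreover have "(\<exists>c. Cs = [c] \<and> \<not> cycle_positive c) \<longrightarrow> fixed_points lo hi f = {}"
    using count_neg[of _ cv] unfolding FP by blast
  ultimately show ?thesis using h(1,2) by blast
qed

theorem corollary6:
  fixes E :: "('v::finite) sdigraph"
  assumes "sconnected E"
  shows "((\<exists>c. negative_cycle E c) \<longrightarrow>
            (\<exists>lo hi f. fds_on E lo hi f \<and> degree_bounded lo hi f \<and> fixed_points lo hi f = {}))
       \<and> ((\<exists>c. positive_cycle E c) \<longrightarrow>
            (\<exists>lo hi f. fds_on E lo hi f \<and> degree_bounded lo hi f \<and> card (fixed_points lo hi f) = 2))
       \<and> (\<forall>Cs :: ('v \<times> sign) list list.
            length Cs \<ge> 1 \<and> (\<forall>c \<in> set Cs. positive_cycle E c) \<and>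
            (\<forall>a < length Cs. \<forall>b < length Cs. a \<noteq> b \<longrightarrow>
               cycle_vertices (Cs ! a) \<inter> cycle_vertices (Cs ! b) = {}) \<longrightarrow>
            (\<exists>lo hi f. fds_on E lo hi f \<and> degree_bounded lo hi f \<and>
               card (fixed_points lo hi f) = 2 ^ length Cs))"
proof (intro conjI impI allI)
  assume "\<exists>c. negative_cycle E c"
  then obtain c where c: "is_cycle E c" "\<not> cycle_positive c" unfolding negative_cycle_def by blast
  have "\<exists>lo hi f. fds_on E lo hi f \<and> degree_bounded lo hi f \<and>
    ((\<forall>c\<in>set [c]. cycle_positive c) \<longrightarrow> card (fixed_points lo hi f) = 2 ^ length [c]) \<and>
    ((\<exists>c'. [c] = [c'] \<and> \<not> cycle_positive c') \<longrightarrow> fixed_points lo hi f = {})"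
    by (rule gen) (use assms c in auto)
  then show "\<exists>lo hi f. fds_on E lo hi f \<and> degree_bounded lo hi f \<and> fixed_points lo hi f = {}"
    using c by blast
next
  assume "\<exists>c. positive_cycle E c"
  then obtain c where c: "is_cycle E c" "cycle_positive c" unfolding positive_cycle_def by blast
  have "\<exists>lo hi f. fds_on E lo hi f \<and> degree_bounded lo hi f \<and>
    ((\<forall>c\<in>set [c]. cycle_positive c) \<longrightarrow> card (fixed_points lo hi f) = 2 ^ length [c]) \<and>
    ((\<exists>c'. [c] = [c'] \<and> \<not> cycle_positive c') \<longrightarrow> fixed_points lo hi f = {})"
    by (rule gen) (use assms c in auto)
  then show "\<exists>lo hi f. fds_on E lo hi f \<and> degree_bounded lo hi f \<and> card (fixed_points lo hi f) = 2"
    using c by auto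
next
  fix Cs :: "('v \<times> sign) list list"
  assume h: "length Cs \<ge> 1 \<and> (\<forall>c \<in> set Cs. positive_cycle E c) \<and>
            (\<forall>a < length Cs. \<forall>b < length Cs. a \<noteq> b \<longrightarrow>
               cycle_vertices (Cs ! a) \<inter> cycle_vertices (Cs ! b) = {})"
  have "\<exists>lo hi f. fds_on E lo hi f \<and> degree_bounded lo hi f \<and>
    ((\<forall>c\<in>set Cs. cycle_positive c) \<longrightarrow> card (fixed_points lo hi f) = 2 ^ length Cs) \<and>
    ((\<exists>c. Cs = [c] \<and> \<not> cycle_positive c) \<longrightarrow> fixed_points lo hi f = {})"
    by (rule gen) (use assms h in \<open>auto simp: positive_cycle_def\<close>)
  then show "\<exists>lo hi f. fds_on E lo hi f \<and> degree_bounded lo hi f \<and> card (fixed_points lo hi f) = 2 ^ length Cs"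
    using h unfolding positive_cycle_def by blast
qed

end
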